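(* Let $G=(V,A)$ be a weighted digraph with $V=\{1,\dots,n\}$, positive arc weights and every vertex of positive degree, and fix $p\in[1,\infty]$. Let $\Omega=\Omega_p^1\cup\Omega_p^2$ where $\Omega_p^1=\{\mathbf{x}\in\mathbb{R}^n:\max_i x_i+\min_i x_i=0,\ \|\mathbf{x}\|_p=1\}$ and $\Omega_p^2=\{\mathbf{x}\in\mathbb{R}^n:\min_i|x_i|=0,\ \|\mathbf{x}\|_p=1\}$. Starting from $\mathbf{x}^1\in\Omega$ and $r^1=r(\mathbf{x}^1)$, define iteratively $$\mathbf{x}^{k+1}\in\operatorname*{argmin}_{\mathbf{x}\in\Omega}\big\{\|\mathbf{x}\|_\infty-Q_{r^k}(\mathbf{x})\big\},\qquad r^{k+1}=r(\mathbf{x}^{k+1}).$$ Then the sequence $\{r^k\}$ converges to the global minimum $r_{\min}=\min_{\mathbf{x}\in\mathbb{R}^n\setminus\{t\mathbf{1}:t\in\mathbb{R}\}} r(\mathbf{x})$.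
   Context: For a vertex $v$, $d_v^+$ and $d_v^-$ are the total weights of arcs leaving and entering $v$; $d_v=d_v^++d_v^-$, $d_v^\delta=d_v^+-d_v^-$, $\mathrm{Vol}(V)=\sum_{v}d_v$. For $\mathbf{x}\in\mathbb{R}^n$: $I^+(\mathbf{x})=\sum_{i\to j\in A}w_{ij}|x_i+x_j|$, $J(\mathbf{x})=|\sum_{i\in V}d_i^\delta x_i|$, $N(\mathbf{x})=\min_{c\in\mathbb{R}}\sum_{i\in V}d_i|x_i-c|$; for non-constant $\mathbf{x}$, $r(\mathbf{x})=\frac{\mathrm{Vol}(V)\|\mathbf{x}\|_\infty-I^+(\mathbf{x})-J(\mathbf{x})}{2N(\mathbf{x})}$; and for $r\in\mathbb{R}$, $Q_r(\mathbf{x})=\frac{I^+(\mathbf{x})+J(\mathbf{x})+2rN(\mathbf{x})}{\mathrm{Vol}(V)}$. (Vectors in $\Omega$ are non-constant.) *)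

theory Defs
  imports "HOL-Analysis.Analysis"
begin

text \<open>Weighted digraph on the finite vertex type 'n (V = UNIV, n = CARD('n)),
  arc set A, weight w i j of the arc i -> j. Vectors are real^'n.\<close>

definition outdeg :: "('n::finite \<times> 'n) set \<Rightarrow> ('n \<Rightarrow> 'n \<Rightarrow> real) \<Rightarrow> 'n \<Rightarrow> real" where
  "outdeg A w v = (\<Sum>j\<in>{j. (v, j) \<in> A}. w v j)"

definition indeg :: "('n::finite \<times> 'n) set \<Rightarrow> ('n \<Rightarrow> 'n \<Rightarrow> real) \<Rightarrow> 'n \<Rightarrow> real" where
  "indeg A w v = (\<Sum>i\<in>{i. (i, v) \<in> A}. w i v)"

definition deg :: "('n::finite \<times> 'n) set \<Rightarrow> ('n \<Rightarrow> 'n \<Rightarrow> real) \<Rightarrow> 'n \<Rightarrow> real" where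
  "deg A w v = outdeg A w v + indeg A w v"

definition degdelta :: "('n::finite \<times> 'n) set \<Rightarrow> ('n \<Rightarrow> 'n \<Rightarrow> real) \<Rightarrow> 'n \<Rightarrow> real" where
  "degdelta A w v = outdeg A w v - indeg A w v"

definition vol :: "('n::finite \<times> 'n) set \<Rightarrow> ('n \<Rightarrow> 'n \<Rightarrow> real) \<Rightarrow> real" where
  "vol A w = (\<Sum>v\<in>UNIV. deg A w v)"

definition Iplus :: "('n::finite \<times> 'n) set \<Rightarrow> ('n \<Rightarrow> 'n \<Rightarrow> real) \<Rightarrow> real^'n \<Rightarrow> real" where
  "Iplus A w x = (\<Sum>(i, j)\<in>A. w i j * \<bar>x$i + x$j\<bar>)"

definition Jf :: "('n::finite \<times> 'n) set \<Rightarrow> ('n \<Rightarrow> 'n \<Rightarrow> real) \<Rightarrow> real^'n \<Rightarrow> real" where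
  "Jf A w x = \<bar>\<Sum>i\<in>UNIV. degdelta A w i * x$i\<bar>"

text \<open>N(x) = min over c of sum d_i |x_i - c| (the minimum is attained, so it equals the infimum).\<close>
definition Nf :: "('n::finite \<times> 'n) set \<Rightarrow> ('n \<Rightarrow> 'n \<Rightarrow> real) \<Rightarrow> real^'n \<Rightarrow> real" where
  "Nf A w x = (INF c::real. (\<Sum>i\<in>UNIV. deg A w i * \<bar>x$i - c\<bar>))"

definition supnorm :: "real^'n::finite \<Rightarrow> real" where
  "supnorm x = Max (range (\<lambda>i. \<bar>x$i\<bar>))"

definition pnorm :: "ereal \<Rightarrow> real^'n::finite \<Rightarrow> real" where
  "pnorm p x = (if p = \<infinity> then supnorm x
                else (\<Sum>i\<in>UNIV. \<bar>x$i\<bar> powr (real_of_ereal p)) powr (1 / real_of_ereal p))"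

definition rf :: "('n::finite \<times> 'n) set \<Rightarrow> ('n \<Rightarrow> 'n \<Rightarrow> real) \<Rightarrow> real^'n \<Rightarrow> real" where
  "rf A w x = (vol A w * supnorm x - Iplus A w x - Jf A w x) / (2 * Nf A w x)"

definition Qf :: "('n::finite \<times> 'n) set \<Rightarrow> ('n \<Rightarrow> 'n \<Rightarrow> real) \<Rightarrow> real \<Rightarrow> real^'n \<Rightarrow> real" where
  "Qf A w r x = (Iplus A w x + Jf A w x + 2 * r * Nf A w x) / vol A w"

definition nonconstant :: "real^'n::finite \<Rightarrow> bool" where
  "nonconstant x \<longleftrightarrow> (\<nexists>t. x = (\<chi> i. t))"

definition Omega1 :: "ereal \<Rightarrow> (real^'n::finite) set" where
  "Omega1 p = {x. Max (range (\<lambda>i. x$i)) + Min (range (\<lambda>i. x$i)) = 0 \<and> pnorm p x = 1}"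

definition Omega2 :: "ereal \<Rightarrow> (real^'n::finite) set" where
  "Omega2 p = {x. Min (range (\<lambda>i. \<bar>x$i\<bar>)) = 0 \<and> pnorm p x = 1}"

definition Omega :: "ereal \<Rightarrow> (real^'n::finite) set" where
  "Omega p = Omega1 p \<union> Omega2 p"

end

theory Submission
  imports Defs
begin


lemma maxr_ge: "(f::'n::finite \<Rightarrow> real) i \<le> Max (range f)"
  by (rule Max_ge) auto
lemma maxr_in: "Max (range (f::'n::finite \<Rightarrow> real)) \<in> range f"
  by (rule Max_in) auto
lemma minr_le: "Min (range f) \<le> (f::'n::finite \<Rightarrow> real) i"
  by (rule Min_le) auto
lemma minr_in: "Min (range (f::'n::finite \<Rightarrow> real)) \<in> range f"
  by (rule Min_in) auto
lemma maxr_le_iff: "Max (range (f::'n::finite \<Rightarrow> real)) \<le> b \<longleftrightarrow> (\<forall>i. f i \<le> b)"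
  by (auto intro: order_trans[OF maxr_ge])
lemma maxr_eqI: "(\<And>i. (f::'n::finite \<Rightarrow> real) i \<le> b) \<Longrightarrow> f j = b \<Longrightarrow> Max (range f) = b"
  by (rule Max_eqI) auto
lemma minr_eqI: "(\<And>i. b \<le> (f::'n::finite \<Rightarrow> real) i) \<Longrightarrow> f j = b \<Longrightarrow> Min (range f) = b"
  by (rule Min_eqI) auto

lemma nonconst_iff: "nonconstant (x::real^'n::finite) \<longleftrightarrow> (\<exists>i j. x$i \<noteq> x$j)"
  unfolding nonconstant_def
  by (metis vec_lambda_beta vec_lambda_unique)

lemma supnorm_ge: "\<bar>x$i\<bar> \<le> supnorm x"
  unfolding supnorm_def by (rule maxr_ge)

lemma supnorm_le: "(\<And>i. \<bar>x$i\<bar> \<le> b) \<Longrightarrow> supnorm x \<le> b"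
  unfolding supnorm_def maxr_le_iff by auto

lemma supnorm_nonneg: "0 \<le> supnorm x"
  using supnorm_ge[of x] abs_ge_zero order_trans by blast

lemma supnorm_scale: "supnorm (s *\<^sub>R x) = \<bar>s\<bar> * supnorm x"
proof -
  obtain j where j: "supnorm x = \<bar>x$j\<bar>" using maxr_in unfolding supnorm_def by (metis imageE)
  show ?thesis unfolding supnorm_def
    apply (rule maxr_eqI[where j=j])
    subgoal for i using supnorm_ge[of x i] by (simp add: abs_mult mult_left_mono supnorm_def)
    using j by (simp add: abs_mult supnorm_def)
qed

lemma A_finite: "finite (A::('n::finite \<times> 'n) set)" by simp

lemma sum_A_split: "(\<Sum>(i,j)\<in>(A::('n::finite \<times> 'n) set). f i j) = (\<Sum>i\<in>UNIV. \<Sum>j\<in>UNIV. if (i,j)\<in>A then f i j else (0::real))"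
proof -
  have "(\<Sum>(i,j)\<in>A. f i j) = (\<Sum>p\<in>UNIV. if p\<in>A then (case p of (i,j) \<Rightarrow> f i j) else 0)"
    by (subst sum.If_cases) (auto simp: Int_absorb1)
  also have "\<dots> = (\<Sum>i\<in>UNIV. \<Sum>j\<in>UNIV. if (i,j)\<in>A then f i j else (0::real))"
    unfolding sum.cartesian_product by (rule sum.cong) (auto split: prod.splits)
  finally show ?thesis .
qed

lemma sum_outdeg: "(\<Sum>v\<in>UNIV. outdeg A w v) = (\<Sum>(i,j)\<in>A. w i j)"
  unfolding sum_A_split outdeg_def
  by (simp add: sum.If_cases Int_absorb1 Collect_conv_if)

lemma sum_indeg: "(\<Sum>v\<in>UNIV. indeg A w v) = (\<Sum>(i,j)\<in>A. w i j)"
proof -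
  have "indeg A w v = (\<Sum>i\<in>UNIV. if (i,v)\<in>A then w i v else 0)" for v
    unfolding indeg_def by (simp add: sum.inter_filter[symmetric])
  then have "(\<Sum>v\<in>UNIV. indeg A w v) = (\<Sum>v\<in>UNIV. \<Sum>i\<in>UNIV. if (i,v)\<in>A then w i v else 0)"
    by simp
  also have "\<dots> = (\<Sum>i\<in>UNIV. \<Sum>v\<in>UNIV. if (i,v)\<in>A then w i v else 0)"
    by (rule sum.swap)
  finally show ?thesis unfolding sum_A_split .
qed

lemma vol_eq: "vol A w = 2 * (\<Sum>(i,j)\<in>A. w i j)"
  unfolding vol_def deg_def sum.distrib sum_outdeg sum_indeg by simp

lemma sum_degdelta: "(\<Sum>v\<in>UNIV. degdelta A w v) = 0"
  unfolding degdelta_def sum_subtractf sum_outdeg sum_indeg by simp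

lemma Iplus_scale: "Iplus A w (s *\<^sub>R x) = \<bar>s\<bar> * Iplus A w x"
  unfolding Iplus_def sum_distrib_left
  by (rule sum.cong) (auto simp: abs_mult distrib_left[symmetric])

lemma Jf_scale: "Jf A w (s *\<^sub>R x) = \<bar>s\<bar> * Jf A w x"
  unfolding Jf_def
  by (simp add: abs_mult[symmetric] sum_distrib_left mult.left_commute)

lemma Jf_shift: "Jf A w (x - vec c) = Jf A w x"
proof -
  have "(\<Sum>i\<in>UNIV. degdelta A w i * (x - vec c)$i) = (\<Sum>i\<in>UNIV. degdelta A w i * x$i) - c * (\<Sum>v\<in>UNIV. degdelta A w v)"
    by (simp add: algebra_simps sum_subtractf sum_distrib_left)
  then show ?thesis unfolding Jf_def sum_degdelta by simp
qed

lemma Iplus_shift: assumes wpos: "\<forall>(i, j)\<in>A. w i j > 0" shows "Iplus A w x \<le> Iplus A w (x - vec c) + vol A w * \<bar>c\<bar>"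
proof -
  have "Iplus A w x \<le> (\<Sum>(i, j)\<in>A. w i j * \<bar>(x - vec c)$i + (x - vec c)$j\<bar> + w i j * (2*\<bar>c\<bar>))"
    unfolding Iplus_def
  proof (rule sum_mono, clarify)
    fix i j assume "(i,j) \<in> A"
    then have w: "w i j > 0" using wpos by auto
    have e: "x$i + x$j = ((x - vec c)$i + (x - vec c)$j) + 2*c" by simp
    have "\<bar>x$i + x$j\<bar> \<le> \<bar>(x - vec c)$i + (x - vec c)$j\<bar> + \<bar>2*c\<bar>"
      unfolding e by (rule abs_triangle_ineq)
    then have "\<bar>x$i + x$j\<bar> \<le> \<bar>(x - vec c)$i + (x - vec c)$j\<bar> + 2*\<bar>c\<bar>" by simp
    from mult_left_mono[OF this, of "w i j"] w
    show "w i j * \<bar>x$i + x$j\<bar> \<le> w i j * \<bar>(x - vec c)$i + (x - vec c)$j\<bar> + w i j * (2*\<bar>c\<bar>)"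
      by (simp only: distrib_left less_imp_le)
  qed
  also have "\<dots> = Iplus A w (x - vec c) + (\<Sum>(i,j)\<in>A. w i j) * (2*\<bar>c\<bar>)"
    unfolding Iplus_def by (simp only: sum.distrib split_def sum_distrib_right)
  also have "\<dots> = Iplus A w (x - vec c) + vol A w * \<bar>c\<bar>"
    by (simp add: vol_eq)
  finally show ?thesis .
qed

context
  fixes A :: "('n::finite \<times> 'n) set" and w :: "'n \<Rightarrow> 'n \<Rightarrow> real"
  assumes degpos: "\<forall>v. deg A w v > 0"
begin

lemma Nf_le: "Nf A w x \<le> (\<Sum>i\<in>UNIV. deg A w i * \<bar>x$i - c\<bar>)"
proof -
  have d: "0 \<le> deg A w i" for i using degpos less_imp_le by blast
  have G: "0 \<le> (\<Sum>i\<in>UNIV. deg A w i * \<bar>x$i - c'\<bar>)" for c'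
    by (rule sum_nonneg) (simp add: d)
  have "bdd_below (range (\<lambda>c'. \<Sum>i\<in>UNIV. deg A w i * \<bar>x$i - c'\<bar>))"
    by (rule bdd_belowI[where m=0]) (use G in blast)
  then show ?thesis unfolding Nf_def by (rule cINF_lower) simp
qed

lemma Nf_ge: "(\<And>c. m \<le> (\<Sum>i\<in>UNIV. deg A w i * \<bar>x$i - c\<bar>)) \<Longrightarrow> m \<le> Nf A w x"
  unfolding Nf_def by (rule cINF_greatest) blast+

lemma Nf_nonneg: "0 \<le> Nf A w x"
proof (rule Nf_ge)
  fix c
  have d: "0 \<le> deg A w i" for i using degpos less_imp_le by blast
  show "0 \<le> (\<Sum>i\<in>UNIV. deg A w i * \<bar>x$i - c\<bar>)"
    by (rule sum_nonneg) (simp add: d)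
qed

lemma Nf_affine_le:
  assumes "\<And>i. y$i = s * x$i + t"
  shows "Nf A w y \<le> \<bar>s\<bar> * Nf A w x"
proof (cases "s = 0")
  case True
  then show ?thesis using Nf_le[of y t] assms by simp
next
  case False
  have "Nf A w y / \<bar>s\<bar> \<le> Nf A w x"
  proof (rule Nf_ge)
    fix c
    have "Nf A w y \<le> (\<Sum>i\<in>UNIV. deg A w i * \<bar>y$i - (s*c+t)\<bar>)" by (rule Nf_le)
    also have "\<dots> = \<bar>s\<bar> * (\<Sum>i\<in>UNIV. deg A w i * \<bar>x$i - c\<bar>)"
    proof -
      have "\<And>i. y$i - (s*c+t) = s*(x$i - c)" using assms by (simp add: algebra_simps)
      then show ?thesis unfolding sum_distrib_left
        by (intro sum.cong) (simp_all add: abs_mult mult.left_commute)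
    qed
    finally show "Nf A w y / \<bar>s\<bar> \<le> (\<Sum>i\<in>UNIV. deg A w i * \<bar>x$i - c\<bar>)"
      using False by (simp add: divide_le_eq mult.commute)
  qed
  then show ?thesis using False by (simp add: divide_le_eq mult.commute)
qed

lemma Nf_scale: "Nf A w (s *\<^sub>R x) = \<bar>s\<bar> * Nf A w x"
proof (cases "s = 0")
  case True
  then show ?thesis using Nf_le[of 0 0] Nf_nonneg[of 0] by simp
next
  case False
  have 1: "Nf A w (s *\<^sub>R x) \<le> \<bar>s\<bar> * Nf A w x" by (rule Nf_affine_le) simp
  have "Nf A w x \<le> \<bar>1/s\<bar> * Nf A w (s *\<^sub>R x)" by (rule Nf_affine_le) (simp add: False)
  also have "\<bar>1/s\<bar> * Nf A w (s *\<^sub>R x) = Nf A w (s *\<^sub>R x) / \<bar>s\<bar>" by simp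
  finally have "\<bar>s\<bar> * Nf A w x \<le> Nf A w (s *\<^sub>R x)" using False
    by (simp add: pos_le_divide_eq mult.commute)
  with 1 show ?thesis by simp
qed

lemma Nf_shift: "Nf A w (x - vec c) = Nf A w x"
proof -
  have "Nf A w (x - vec c) \<le> \<bar>1\<bar> * Nf A w x" by (rule Nf_affine_le) simp
  moreover have "Nf A w x \<le> \<bar>1\<bar> * Nf A w (x - vec c)" by (rule Nf_affine_le[where t=c]) simp
  ultimately show ?thesis by simp
qed

lemma Nf_pos: assumes "nonconstant x" shows "0 < Nf A w x"
proof -
  obtain a b where ab: "x$a \<noteq> x$b" using assms nonconst_iff by blast
  then have "a \<noteq> b" by auto
  define m where "m = min (deg A w a) (deg A w b)"
  have m: "m > 0" using degpos by (simp add: m_def)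
  have "m * \<bar>x$a - x$b\<bar> \<le> Nf A w x"
  proof (rule Nf_ge)
    fix c
    have "m * \<bar>x$a - x$b\<bar> \<le> m * (\<bar>x$a - c\<bar> + \<bar>x$b - c\<bar>)"
      using m by (intro mult_left_mono) auto
    also have "\<dots> \<le> deg A w a * \<bar>x$a - c\<bar> + deg A w b * \<bar>x$b - c\<bar>"
    proof -
      have "m \<le> deg A w a" "m \<le> deg A w b" unfolding m_def by auto
      then have "m * \<bar>x$a - c\<bar> \<le> deg A w a * \<bar>x$a - c\<bar>" "m * \<bar>x$b - c\<bar> \<le> deg A w b * \<bar>x$b - c\<bar>"
        by (auto intro: mult_right_mono)
      then show ?thesis unfolding distrib_left by (rule add_mono)
    qed
    also have "\<dots> = (\<Sum>i\<in>{a,b}. deg A w i * \<bar>x$i - c\<bar>)" using \<open>a \<noteq> b\<close> by simp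
    also have "\<dots> \<le> (\<Sum>i\<in>UNIV. deg A w i * \<bar>x$i - c\<bar>)"
      by (rule sum_mono2) (auto simp: less_imp_le degpos)
    finally show "m * \<bar>x$a - x$b\<bar> \<le> (\<Sum>i\<in>UNIV. deg A w i * \<bar>x$i - c\<bar>)" .
  qed
  moreover have "0 < m * \<bar>x$a - x$b\<bar>" using m ab by simp
  ultimately show ?thesis by linarith
qed

lemma Nf_le_vol: "Nf A w x \<le> vol A w * supnorm x"
proof -
  have "Nf A w x \<le> (\<Sum>i\<in>UNIV. deg A w i * \<bar>x$i - 0\<bar>)" by (rule Nf_le)
  also have "\<dots> \<le> (\<Sum>i\<in>UNIV. deg A w i * supnorm x)"
    by (rule sum_mono) (auto intro!: mult_left_mono supnorm_ge simp: less_imp_le degpos)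
  finally show ?thesis by (simp add: vol_def sum_distrib_right)
qed

lemma Nf_lip: "Nf A w x \<le> Nf A w y + (\<Sum>i\<in>UNIV. deg A w i * \<bar>x$i - y$i\<bar>)"
proof -
  have "Nf A w x - (\<Sum>i\<in>UNIV. deg A w i * \<bar>x$i - y$i\<bar>) \<le> Nf A w y"
  proof (rule Nf_ge)
    fix c
    have "Nf A w x \<le> (\<Sum>i\<in>UNIV. deg A w i * \<bar>x$i - c\<bar>)" by (rule Nf_le)
    also have "\<dots> \<le> (\<Sum>i\<in>UNIV. deg A w i * \<bar>y$i - c\<bar> + deg A w i * \<bar>x$i - y$i\<bar>)"
    proof (rule sum_mono)
      fix i
      have "\<bar>x$i - c\<bar> \<le> \<bar>y$i - c\<bar> + \<bar>x$i - y$i\<bar>"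
        using abs_triangle_ineq[of "y$i - c" "x$i - y$i"] by simp
      moreover have "0 \<le> deg A w i" using degpos less_imp_le by blast
      ultimately have "deg A w i * \<bar>x$i - c\<bar> \<le> deg A w i * (\<bar>y$i - c\<bar> + \<bar>x$i - y$i\<bar>)"
        by (rule mult_left_mono)
      then show "deg A w i * \<bar>x$i - c\<bar> \<le> deg A w i * \<bar>y$i - c\<bar> + deg A w i * \<bar>x$i - y$i\<bar>"
        by (simp only: distrib_left)
    qed
    also have "\<dots> = (\<Sum>i\<in>UNIV. deg A w i * \<bar>y$i - c\<bar>) + (\<Sum>i\<in>UNIV. deg A w i * \<bar>x$i - y$i\<bar>)"
      by (rule sum.distrib)
    finally show "Nf A w x - (\<Sum>i\<in>UNIV. deg A w i * \<bar>x$i - y$i\<bar>) \<le> (\<Sum>i\<in>UNIV. deg A w i * \<bar>y$i - c\<bar>)"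
      by linarith
  qed
  then show ?thesis by linarith
qed

end



lemma rf_scale:
  assumes degpos: "\<forall>v. deg A w v > 0" and s: "s \<noteq> 0"
  shows "rf A w (s *\<^sub>R x) = rf A w x"
proof -
  have "rf A w (s *\<^sub>R x) = (\<bar>s\<bar> * (vol A w * supnorm x - Iplus A w x - Jf A w x)) / (\<bar>s\<bar> * (2 * Nf A w x))"
    unfolding rf_def supnorm_scale Iplus_scale Jf_scale Nf_scale[OF degpos]
    by (simp only: right_diff_distrib mult.left_commute)
  also have "\<dots> = rf A w x" unfolding rf_def using s by simp
  finally show ?thesis .
qed

lemma rf_eq:
  assumes degpos: "\<forall>v. deg A w v > 0" and "nonconstant x"
  shows "vol A w * supnorm x - Iplus A w x - Jf A w x = 2 * Nf A w x * rf A w x"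
  using Nf_pos[OF degpos assms(2)] unfolding rf_def by simp

lemma nonconst_scale: "nonconstant x \<Longrightarrow> s \<noteq> 0 \<Longrightarrow> nonconstant (s *\<^sub>R x)"
  unfolding nonconst_iff by auto

lemma nonconst_shift: "nonconstant x \<Longrightarrow> nonconstant (x - vec c)"
  unfolding nonconst_iff by auto

lemma pnorm_scale: "pnorm p (s *\<^sub>R x) = \<bar>s\<bar> * pnorm p x" if p: "1 \<le> p"
proof (cases "p = \<infinity>")
  case True
  then show ?thesis unfolding pnorm_def by (simp add: supnorm_scale)
next
  case False
  define q where "q = real_of_ereal p"
  have q: "q \<ge> 1" using p False unfolding q_def
    by (cases p) auto
  have "(\<Sum>i\<in>UNIV. \<bar>(s *\<^sub>R x)$i\<bar> powr q) = \<bar>s\<bar> powr q * (\<Sum>i\<in>UNIV. \<bar>x$i\<bar> powr q)"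
    unfolding sum_distrib_left by (rule sum.cong) (simp_all add: abs_mult powr_mult)
  then have "pnorm p (s *\<^sub>R x) = (\<bar>s\<bar> powr q * (\<Sum>i\<in>UNIV. \<bar>x$i\<bar> powr q)) powr (1/q)"
    unfolding pnorm_def q_def using False by simp
  also have "\<dots> = (\<bar>s\<bar> powr q) powr (1/q) * (\<Sum>i\<in>UNIV. \<bar>x$i\<bar> powr q) powr (1/q)"
    by (rule powr_mult; auto intro: sum_nonneg)
  also have "(\<bar>s\<bar> powr q) powr (1/q) = \<bar>s\<bar>"
    using q by (simp add: powr_powr)
  finally show ?thesis unfolding pnorm_def q_def using False by simp
qed

lemma supnorm_le_pnorm: "supnorm x \<le> pnorm p x" if p: "1 \<le> p"
proof (cases "p = \<infinity>")
  case True
  then show ?thesis unfolding pnorm_def by simp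
next
  case False
  define q where "q = real_of_ereal p"
  have q: "q \<ge> 1" using p False unfolding q_def
    by (cases p) auto
  have "\<bar>x$i\<bar> \<le> (\<Sum>i\<in>UNIV. \<bar>x$i\<bar> powr q) powr (1/q)" for i
  proof -
    have "\<bar>x$i\<bar> = (\<bar>x$i\<bar> powr q) powr (1/q)" using q by (simp add: powr_powr)
    also have "\<dots> \<le> (\<Sum>i\<in>UNIV. \<bar>x$i\<bar> powr q) powr (1/q)"
      using q by (intro powr_mono2 member_le_sum) auto
    finally show ?thesis .
  qed
  then show ?thesis unfolding pnorm_def q_def using False by (simp add: supnorm_le)
qed

lemma pnorm_zero: "1 \<le> p \<Longrightarrow> pnorm p 0 = 0"
  using pnorm_scale[of p 0 0] by simp

lemma pnorm_pos: assumes "1 \<le> p" "x \<noteq> 0" shows "0 < pnorm p x"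
proof -
  obtain i where "x$i \<noteq> 0" using assms(2) by (metis vec_eq_iff zero_index)
  then have "0 < \<bar>x$i\<bar>" by simp
  also have "\<dots> \<le> supnorm x" by (rule supnorm_ge)
  also have "\<dots> \<le> pnorm p x" using assms(1) by (rule supnorm_le_pnorm)
  finally show ?thesis .
qed

lemma Omega_nonconst: assumes "1 \<le> p" "x \<in> Omega p" shows "nonconstant x"
proof (rule ccontr)
  assume "\<not> nonconstant x"
  then obtain t where t: "x = (\<chi> i. t)" unfolding nonconstant_def by blast
  then have xt: "\<And>i. x$i = t" by simp
  have r1: "range (\<lambda>i. x$i) = {t}" and r2: "range (\<lambda>i. \<bar>x$i\<bar>) = {\<bar>t\<bar>}" using xt by auto
  have "t = 0" using assms(2) by (auto simp: Omega_def Omega1_def Omega2_def r1 r2)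
  then have "x = 0" using t by (simp add: vec_eq_iff)
  moreover have "pnorm p x = 1" using assms(2) unfolding Omega_def Omega1_def Omega2_def by auto
  ultimately show False using pnorm_zero[OF assms(1)] by (metis zero_neq_one)
qed



lemma maxr_scale: "0 \<le> s \<Longrightarrow> Max (range (\<lambda>i. s * (f::'n::finite \<Rightarrow> real) i)) = s * Max (range f)"
proof -
  assume s: "0 \<le> s"
  obtain j where j: "f j = Max (range f)" using maxr_in by (metis imageE)
  show ?thesis
    by (rule maxr_eqI[where j=j]) (use s maxr_ge j in \<open>auto intro: mult_left_mono\<close>)
qed

lemma minr_scale: "0 \<le> s \<Longrightarrow> Min (range (\<lambda>i. s * (f::'n::finite \<Rightarrow> real) i)) = s * Min (range f)"
proof -
  assume s: "0 \<le> s"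
  obtain j where j: "f j = Min (range f)" using minr_in by (metis imageE)
  show ?thesis
    by (rule minr_eqI[where j=j]) (use s minr_le j in \<open>auto intro: mult_left_mono\<close>)
qed

lemma maxr_neg: "Max (range (\<lambda>i. - (f::'n::finite \<Rightarrow> real) i)) = - Min (range f)"
proof -
  obtain j where j: "f j = Min (range f)" using minr_in by (metis imageE)
  show ?thesis
    by (rule maxr_eqI[where j=j]) (use minr_le j in auto)
qed

lemma minr_neg: "Min (range (\<lambda>i. - (f::'n::finite \<Rightarrow> real) i)) = - Max (range f)"
proof -
  obtain j where j: "f j = Max (range f)" using maxr_in by (metis imageE)
  show ?thesis
    by (rule minr_eqI[where j=j]) (use maxr_ge j in auto)
qed

lemma maxr_shift: "Max (range (\<lambda>i. (f::'n::finite \<Rightarrow> real) i - h)) = Max (range f) - h"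
proof -
  obtain j where j: "f j = Max (range f)" using maxr_in by (metis imageE)
  show ?thesis
    by (rule maxr_eqI[where j=j]) (use maxr_ge j in auto)
qed

lemma minr_shift: "Min (range (\<lambda>i. (f::'n::finite \<Rightarrow> real) i - h)) = Min (range f) - h"
proof -
  obtain j where j: "f j = Min (range f)" using minr_in by (metis imageE)
  show ?thesis
    by (rule minr_eqI[where j=j]) (use minr_le j in auto)
qed

definition mm :: "real^'n::finite \<Rightarrow> real" where
  "mm x = Max (range (\<lambda>i. x$i)) + Min (range (\<lambda>i. x$i))"

lemma mm_scale: "0 \<le> s \<Longrightarrow> mm (s *\<^sub>R x) = s * mm x"
  unfolding mm_def using maxr_scale[of s "\<lambda>i. x$i"] minr_scale[of s "\<lambda>i. x$i"]
  by (simp add: distrib_left)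

lemma mm_neg: "mm ((-1) *\<^sub>R x) = - mm x"
  unfolding mm_def using maxr_neg[of "\<lambda>i. x$i"] minr_neg[of "\<lambda>i. x$i"] by simp

lemma mm_shift: "mm (x - vec h) = mm x - 2 * h"
  unfolding mm_def using maxr_shift[of "\<lambda>i. x$i" h] minr_shift[of "\<lambda>i. x$i" h] by simp

lemma shift_down:
  fixes y :: "real^'n::finite"
  assumes wpos: "\<forall>(i, j)\<in>A. w i j > 0" and degpos: "\<forall>v. deg A w v > 0"
    and nc: "nonconstant y" and h: "h = mm y / 2" and h0: "0 \<le> h"
  shows "rf A w (y - vec h) \<le> rf A w y" "mm (y - vec h) = 0"
proof -
  define M where "M = Max (range (\<lambda>i. y$i))"
  define m where "m = Min (range (\<lambda>i. y$i))"
  have hM: "2 * h = M + m" unfolding h mm_def M_def m_def by simp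
  obtain j where j: "y$j = M" unfolding M_def using maxr_in by (metis imageE)
  have yM: "y$i \<le> M" for i unfolding M_def by (rule maxr_ge)
  have ym: "m \<le> y$i" for i unfolding m_def by (rule minr_le)
  have supy: "M \<le> supnorm y" using supnorm_ge[of y j] j by simp
  have supz: "supnorm (y - vec h) \<le> M - h"
    by (rule supnorm_le) (use yM ym hM in \<open>auto simp: abs_le_iff\<close>)
  have I: "Iplus A w y \<le> Iplus A w (y - vec h) + vol A w * h"
    using Iplus_shift[OF wpos, of y h] h0 by simp
  have vol0: "0 \<le> vol A w" unfolding vol_def using degpos by (simp add: less_imp_le sum_nonneg)
  have "vol A w * supnorm (y - vec h) \<le> vol A w * (M - h)"
    using supz vol0 by (rule mult_left_mono)
  moreover have "vol A w * M \<le> vol A w * supnorm y"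
    using supy vol0 by (rule mult_left_mono)
  ultimately have num: "vol A w * supnorm (y - vec h) - Iplus A w (y - vec h) - Jf A w (y - vec h)
      \<le> vol A w * supnorm y - Iplus A w y - Jf A w y"
    using I unfolding Jf_shift by (simp add: right_diff_distrib)
  have N: "Nf A w (y - vec h) = Nf A w y" by (rule Nf_shift[OF degpos])
  have Npos: "0 < Nf A w y" by (rule Nf_pos[OF degpos nc])
  show "rf A w (y - vec h) \<le> rf A w y"
    unfolding rf_def N using num Npos by (simp add: divide_right_mono)
  show "mm (y - vec h) = 0" unfolding mm_shift h by simp
qed

lemma normalize:
  fixes y :: "real^'n::finite"
  assumes wpos: "\<forall>(i, j)\<in>A. w i j > 0" and degpos: "\<forall>v. deg A w v > 0"
    and nc: "nonconstant y"
  shows "\<exists>z. nonconstant z \<and> mm z = 0 \<and> rf A w z \<le> rf A w y"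
proof (cases "0 \<le> mm y")
  case True
  show ?thesis
    using shift_down[OF wpos degpos nc refl] True nonconst_shift[OF nc] by auto
next
  case False
  define y' where "y' = (-1) *\<^sub>R y"
  have nc': "nonconstant y'" unfolding y'_def by (rule nonconst_scale[OF nc]) simp
  have r: "rf A w y' = rf A w y" unfolding y'_def by (rule rf_scale[OF degpos]) simp
  have "0 \<le> mm y'" unfolding y'_def mm_neg using False by simp
  then show ?thesis
    using shift_down[OF wpos degpos nc' refl] nonconst_shift[OF nc'] r by auto
qed



lemma cont_Max_fin:
  fixes f :: "'i \<Rightarrow> 'a::topological_space \<Rightarrow> real"
  assumes "finite S" "S \<noteq> {}" "\<And>i. i \<in> S \<Longrightarrow> continuous_on U (f i)"
  shows "continuous_on U (\<lambda>x. Max ((\<lambda>i. f i x) ` S))"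
  using assms
proof (induction S rule: finite_ne_induct)
  case (singleton a)
  then show ?case by simp
next
  case (insert a F)
  have "(\<lambda>x. Max ((\<lambda>i. f i x) ` insert a F)) = (\<lambda>x. max (f a x) (Max ((\<lambda>i. f i x) ` F)))"
    using insert.hyps by simp
  then show ?case using insert by (auto intro!: continuous_on_max)
qed

lemma cont_Min_fin:
  fixes f :: "'i \<Rightarrow> 'a::topological_space \<Rightarrow> real"
  assumes "finite S" "S \<noteq> {}" "\<And>i. i \<in> S \<Longrightarrow> continuous_on U (f i)"
  shows "continuous_on U (\<lambda>x. Min ((\<lambda>i. f i x) ` S))"
  using assms
proof (induction S rule: finite_ne_induct)
  case (singleton a)
  then show ?case by simp
next
  case (insert a F)
  have "(\<lambda>x. Min ((\<lambda>i. f i x) ` insert a F)) = (\<lambda>x. min (f a x) (Min ((\<lambda>i. f i x) ` F)))"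
    using insert.hyps by simp
  then show ?case using insert by (auto intro!: continuous_on_min)
qed

lemma cont_supnorm: "continuous_on U (supnorm :: real^'n::finite \<Rightarrow> real)"
proof -
  have "continuous_on U (\<lambda>x::real^'n. Max ((\<lambda>i. \<bar>x$i\<bar>) ` UNIV))"
    by (rule cont_Max_fin) (auto intro!: continuous_intros)
  then show ?thesis unfolding supnorm_def by simp
qed

lemma cont_mm: "continuous_on U (mm :: real^'n::finite \<Rightarrow> real)"
proof -
  have "continuous_on U (\<lambda>x::real^'n. Max ((\<lambda>i. x$i) ` UNIV))"
    by (rule cont_Max_fin) (auto intro!: continuous_intros)
  moreover have "continuous_on U (\<lambda>x::real^'n. Min ((\<lambda>i. x$i) ` UNIV))"
    by (rule cont_Min_fin) (auto intro!: continuous_intros)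
  ultimately show ?thesis unfolding mm_def by (intro continuous_on_add)
qed

lemma cont_Iplus: fixes A :: "('n::finite \<times> 'n) set" shows "continuous_on U (Iplus A w)"
proof -
  have "continuous_on U (\<lambda>x::real^'n. \<Sum>p\<in>A. w (fst p) (snd p) * \<bar>x$(fst p) + x$(snd p)\<bar>)"
    by (intro continuous_intros)
  then show ?thesis unfolding Iplus_def split_def by simp
qed

lemma cont_Jf: "continuous_on U (Jf A w)"
  unfolding Jf_def by (intro continuous_intros)

lemma cont_Nf:
  fixes A :: "('n::finite \<times> 'n) set"
  assumes degpos: "\<forall>v. deg A w v > 0"
  shows "continuous_on U (Nf A w)"
proof -
  have "(vol A w)-lipschitz_on U (Nf A w)"
  proof (rule lipschitz_onI)
    have d: "0 \<le> deg A w i" for i using degpos less_imp_le by blast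
    have key: "Nf A w x \<le> Nf A w y + vol A w * dist x y" for x y :: "real^'n"
    proof -
      have "(\<Sum>i\<in>UNIV. deg A w i * \<bar>x$i - y$i\<bar>) \<le> (\<Sum>i\<in>UNIV. deg A w i * dist x y)"
      proof (rule sum_mono)
        fix i
        have "\<bar>x$i - y$i\<bar> \<le> dist x y"
          using component_le_norm_cart[of "x - y" i] by (simp add: dist_norm)
        then show "deg A w i * \<bar>x$i - y$i\<bar> \<le> deg A w i * dist x y"
          using d by (rule mult_left_mono)
      qed
      also have "\<dots> = vol A w * dist x y" unfolding vol_def by (simp add: sum_distrib_right)
      finally show ?thesis using Nf_lip[OF degpos, of x y] by linarith
    qed
    fix x y :: "real^'n"
    show "dist (Nf A w x) (Nf A w y) \<le> vol A w * dist x y"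
      using key[of x y] key[of y x] by (simp add: dist_real_def dist_commute abs_le_iff)
    show "0 \<le> vol A w" unfolding vol_def using d by (simp add: sum_nonneg)
  qed
  then show ?thesis by (rule lipschitz_on_continuous_on)
qed

definition KK :: "(real^'n::finite) set" where
  "KK = {x. mm x = 0 \<and> supnorm x = 1}"

lemma KK_nonconst: "x \<in> KK \<Longrightarrow> nonconstant x"
proof (rule ccontr)
  assume x: "x \<in> KK" and "\<not> nonconstant x"
  then obtain t where "x = (\<chi> i. t)" unfolding nonconstant_def by blast
  then have xt: "\<And>i. x$i = t" by simp
  have "Max (range (\<lambda>i. x$i)) = t" by (rule maxr_eqI) (auto simp: xt)
  moreover have "Min (range (\<lambda>i. x$i)) = t" by (rule minr_eqI) (auto simp: xt)
  ultimately have "t = 0" using x unfolding KK_def mm_def by simp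
  then have "supnorm x \<le> 0" by (intro supnorm_le) (simp add: xt)
  then show False using x unfolding KK_def by simp
qed

lemma KK_compact: "compact (KK :: (real^'n::finite) set)"
proof (rule compact_eq_bounded_closed[THEN iffD2], rule conjI)
  show "bounded (KK :: (real^'n) set)"
    unfolding bounded_iff
  proof (intro exI ballI)
    fix x :: "real^'n" assume x: "x \<in> KK"
    have "norm x \<le> (\<Sum>i\<in>UNIV. \<bar>x$i\<bar>)" by (rule norm_le_l1_cart)
    also have "\<dots> \<le> (\<Sum>i\<in>(UNIV::'n set). 1)"
      by (rule sum_mono) (use x supnorm_ge[of x] in \<open>auto simp: KK_def\<close>)
    finally show "norm x \<le> real CARD('n)" by simp
  qed
  have e: "KK = {x::real^'n. mm x = 0} \<inter> {x. supnorm x = 1}" unfolding KK_def by auto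
  have c1: "closed {x::real^'n. mm x = 0}"
    by (rule closed_Collect_eq) (rule cont_mm, rule continuous_on_const)
  have c2: "closed {x::real^'n. supnorm x = 1}"
    by (rule closed_Collect_eq) (rule cont_supnorm, rule continuous_on_const)
  show "closed (KK :: (real^'n) set)" unfolding e using c1 c2 by (rule closed_Int)
qed

lemma cont_rf_KK:
  fixes A :: "('n::finite \<times> 'n) set"
  assumes degpos: "\<forall>v. deg A w v > 0"
  shows "continuous_on KK (rf A w)"
proof -
  have "continuous_on KK (\<lambda>x. (vol A w * supnorm x - Iplus A w x - Jf A w x) / (2 * Nf A w x))"
  proof -
    have np: "\<forall>x\<in>KK. 2 * Nf A w x \<noteq> 0"
    proof
      fix x :: "real^'n" assume "x \<in> KK"
      then have "0 < Nf A w x" using Nf_pos[OF degpos KK_nonconst] by blast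
      then show "2 * Nf A w x \<noteq> 0" by simp
    qed
    show ?thesis
      by (rule continuous_on_divide[OF _ _ np]) (intro continuous_intros cont_supnorm cont_Iplus cont_Jf cont_Nf[OF degpos])+
  qed
  then show ?thesis unfolding rf_def[abs_def] .
qed



lemma nonconst_nz: "nonconstant z \<Longrightarrow> \<exists>i. z$i \<noteq> 0"
  unfolding nonconst_iff by (metis)

lemma supnorm_pos: "nonconstant z \<Longrightarrow> 0 < supnorm z"
proof -
  assume "nonconstant z"
  then obtain i where "z$i \<noteq> 0" using nonconst_nz by blast
  then have "0 < \<bar>z$i\<bar>" by simp
  also have "\<dots> \<le> supnorm z" by (rule supnorm_ge)
  finally show ?thesis .
qed

lemma to_KK:
  assumes degpos: "\<forall>v. deg A w v > 0" and nc: "nonconstant z" and mm: "mm z = 0"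
  shows "(1 / supnorm z) *\<^sub>R z \<in> KK" "rf A w ((1 / supnorm z) *\<^sub>R z) = rf A w z"
proof -
  have sp: "0 < supnorm z" by (rule supnorm_pos[OF nc])
  show "(1 / supnorm z) *\<^sub>R z \<in> KK"
    unfolding KK_def using sp mm by (simp add: mm_scale supnorm_scale)
  show "rf A w ((1 / supnorm z) *\<^sub>R z) = rf A w z"
    by (rule rf_scale[OF degpos]) (use sp in simp)
qed

lemma tail_mono:
  fixes a :: "nat \<Rightarrow> real"
  assumes "\<forall>k\<ge>1. a (Suc k) \<le> a k" "1 \<le> K" "K \<le> n"
  shows "a n \<le> a K"
  using assms(3)
proof (induction n rule: dec_induct)
  case base
  then show ?case by simp
next
  case (step n)
  then show ?case using assms(1,2) by (meson le_trans order_trans)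
qed

lemma tail_linear:
  fixes a :: "nat \<Rightarrow> real"
  assumes "\<forall>k\<ge>1. a (Suc k) \<le> a k - eta"
  shows "a (Suc n) \<le> a 1 - real n * eta"
proof (induction n)
  case 0
  then show ?case by simp
next
  case (Suc n)
  have "a (Suc (Suc n)) \<le> a (Suc n) - eta" using assms by simp
  then show ?case using Suc by (simp add: algebra_simps)
qed

theorem theorem3p1:
  fixes A :: "('n::finite \<times> 'n) set" and w :: "'n \<Rightarrow> 'n \<Rightarrow> real"
    and p :: ereal and xs :: "nat \<Rightarrow> real^'n"
  assumes wpos: "\<forall>(i, j)\<in>A. w i j > 0"
    and degpos: "\<forall>v. deg A w v > 0"
    and p1: "1 \<le> p"
    and init: "xs 1 \<in> Omega p"
    and iter: "\<forall>k\<ge>1. is_arg_min (\<lambda>x. supnorm x - Qf A w (rf A w (xs k)) x)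
                                 (\<lambda>x. x \<in> Omega p) (xs (Suc k))"
  shows "\<exists>x0. nonconstant x0 \<and> (\<forall>y. nonconstant y \<longrightarrow> rf A w x0 \<le> rf A w y)
           \<and> (\<lambda>k. rf A w (xs k)) \<longlonglongrightarrow> rf A w x0"
proof -
  have red: "\<exists>z\<in>KK. rf A w z \<le> rf A w y" if ncy: "nonconstant y" for y :: "real^'n"
  proof -
    obtain z where z: "nonconstant z" "mm z = 0" "rf A w z \<le> rf A w y"
      using normalize[OF wpos degpos ncy] by blast
    show ?thesis using to_KK[OF degpos z(1,2)] z(3) by metis
  qed
  have nc1: "nonconstant (xs 1)" by (rule Omega_nonconst[OF p1 init])
  have KKne: "KK \<noteq> ({} :: (real^'n) set)" using red[OF nc1] by blast
  obtain x0 :: "real^'n" where x0: "x0 \<in> KK" "\<forall>y\<in>KK. rf A w x0 \<le> rf A w y"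
    using continuous_attains_inf[OF KK_compact KKne cont_rf_KK[OF degpos]] by blast
  have ncx0: "nonconstant x0" by (rule KK_nonconst[OF x0(1)])
  have glob: "rf A w x0 \<le> rf A w y" if "nonconstant y" for y
    using red[OF that] x0(2) by force
  define rmin where "rmin = rf A w x0"
  define z0 where "z0 = (1 / pnorm p x0) *\<^sub>R x0"
  have x0nz: "x0 \<noteq> 0" using ncx0 nonconst_nz by fastforce
  have pp: "0 < pnorm p x0" by (rule pnorm_pos[OF p1 x0nz])
  have z0O: "z0 \<in> Omega p"
  proof -
    have "mm z0 = 0" unfolding z0_def using pp x0(1) by (simp add: mm_scale KK_def)
    moreover have "pnorm p z0 = 1" unfolding z0_def using pp by (simp add: pnorm_scale[OF p1])
    ultimately show ?thesis unfolding Omega_def Omega1_def mm_def by simp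
  qed
  have rz0: "rf A w z0 = rmin" unfolding z0_def rmin_def
    by (rule rf_scale[OF degpos]) (use pp in simp)
  have ncz0: "nonconstant z0" by (rule Omega_nonconst[OF p1 z0O])
  define a where "a k = rf A w (xs k)" for k
  have inO: "xs k \<in> Omega p" if "1 \<le> k" for k
    using that
  proof (induction k rule: dec_induct)
    case base then show ?case by (rule init)
  next
    case (step k)
    then show ?case using iter unfolding is_arg_min_def by simp
  qed
  have ncxs: "nonconstant (xs k)" if "1 \<le> k" for k by (rule Omega_nonconst[OF p1 inO[OF that]])
  have vol0: "0 < vol A w" unfolding vol_def using degpos
    by (simp add: sum_pos)
  have fform: "supnorm x - Qf A w r x = 2 * Nf A w x * (rf A w x - r) / vol A w"
    if "nonconstant x" for x r
  proof -
    have "supnorm x - Qf A w r x = (vol A w * supnorm x - Iplus A w x - Jf A w x - 2 * r * Nf A w x) / vol A w"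
      unfolding Qf_def using vol0 by (simp add: field_simps)
    also have "\<dots> = 2 * Nf A w x * (rf A w x - r) / vol A w"
      unfolding rf_eq[OF degpos that] by (simp add: algebra_simps)
    finally show ?thesis .
  qed
  have amin: "2 * Nf A w (xs (Suc k)) * (a (Suc k) - a k) \<le> 2 * Nf A w y * (rf A w y - a k)"
    if "1 \<le> k" "y \<in> Omega p" for k y
  proof -
    have "supnorm (xs (Suc k)) - Qf A w (a k) (xs (Suc k)) \<le> supnorm y - Qf A w (a k) y"
      using iter that unfolding is_arg_min_linorder a_def by simp
    moreover have "nonconstant (xs (Suc k))" using ncxs[of "Suc k"] that by simp
    ultimately have "2 * Nf A w (xs (Suc k)) * (a (Suc k) - a k) / vol A w \<le> 2 * Nf A w y * (rf A w y - a k) / vol A w"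
      using fform[of "xs (Suc k)" "a k"] fform[OF Omega_nonconst[OF p1 that(2)], of "a k"] unfolding a_def
      by simp
    then show ?thesis using vol0 by (simp add: divide_right_mono_neg divide_le_cancel)
  qed
  have dec: "\<forall>k\<ge>1. a (Suc k) \<le> a k"
  proof (intro allI impI)
    fix k :: nat assume k: "1 \<le> k"
    have "2 * Nf A w (xs (Suc k)) * (a (Suc k) - a k) \<le> 2 * Nf A w (xs k) * (rf A w (xs k) - a k)"
      by (rule amin[OF k inO[OF k]])
    then have "Nf A w (xs (Suc k)) * (a (Suc k) - a k) \<le> 0" unfolding a_def by simp
    moreover have "0 < Nf A w (xs (Suc k))" using Nf_pos[OF degpos ncxs[of "Suc k"]] k by simp
    ultimately show "a (Suc k) \<le> a k" by (simp add: mult_le_0_iff)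
  qed
  have lb: "rmin \<le> a k" if "1 \<le> k" for k
    unfolding rmin_def a_def by (rule glob[OF ncxs[OF that]])
  have Nbound: "Nf A w x \<le> vol A w" if "x \<in> Omega p" for x
  proof -
    have "supnorm x \<le> pnorm p x" by (rule supnorm_le_pnorm[OF p1])
    also have "pnorm p x = 1" using that unfolding Omega_def Omega1_def Omega2_def by auto
    finally have "vol A w * supnorm x \<le> vol A w" using vol0 by (simp add: mult_left_le)
    then show ?thesis using Nf_le_vol[OF degpos, of x] by linarith
  qed
  have Nz0: "0 < Nf A w z0" by (rule Nf_pos[OF degpos ncz0])
  have small: "\<exists>K\<ge>1. a K < rmin + e" if e: "0 < e" for e
  proof (rule ccontr)
    assume "\<not> (\<exists>K\<ge>1. a K < rmin + e)"
    then have big: "\<forall>k\<ge>1. rmin + e \<le> a k" by (simp add: not_less)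
    define eta where "eta = Nf A w z0 * e / vol A w"
    have eta: "0 < eta" unfolding eta_def using Nz0 e vol0 by simp
    have step: "\<forall>k\<ge>1. a (Suc k) \<le> a k - eta"
    proof (intro allI impI)
      fix k :: nat assume k: "1 \<le> k"
      have "2 * Nf A w (xs (Suc k)) * (a (Suc k) - a k) \<le> 2 * Nf A w z0 * (rmin - a k)"
        using amin[OF k z0O] rz0 by simp
      then have 1: "Nf A w z0 * (a k - rmin) \<le> Nf A w (xs (Suc k)) * (a k - a (Suc k))"
        by (simp add: algebra_simps)
      have "Nf A w z0 * e \<le> Nf A w z0 * (a k - rmin)"
        using big k Nz0 by (intro mult_left_mono) auto
      also note 1
      also have "Nf A w (xs (Suc k)) * (a k - a (Suc k)) \<le> vol A w * (a k - a (Suc k))"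
        using Nbound[OF inO[of "Suc k"]] dec k by (intro mult_right_mono) auto
      finally have "Nf A w z0 * e \<le> vol A w * (a k - a (Suc k))" .
      then have "eta \<le> a k - a (Suc k)" unfolding eta_def using vol0
        by (simp add: divide_le_eq mult.commute)
      then show "a (Suc k) \<le> a k - eta" by simp
    qed
    obtain n where n: "a 1 - rmin < real n * eta"
      using reals_Archimedean3[OF eta] by blast
    have "a (Suc n) \<le> a 1 - real n * eta" by (rule tail_linear[OF step])
    moreover have "rmin \<le> a (Suc n)" by (rule lb) simp
    ultimately show False using n by simp
  qed
  have conv: "a \<longlonglongrightarrow> rmin"
  proof (rule LIMSEQ_I)
    fix e :: real assume e: "0 < e"
    obtain K where K: "1 \<le> K" "a K < rmin + e" using small[OF e] by blast
    show "\<exists>no. \<forall>n\<ge>no. norm (a n - rmin) < e"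
    proof (intro exI allI impI)
      fix n assume n: "K \<le> n"
      have "a n \<le> a K" by (rule tail_mono[OF dec K(1) n])
      moreover have "rmin \<le> a n" using lb K(1) n by simp
      ultimately show "norm (a n - rmin) < e" using K(2) by simp
    qed
  qed
  show ?thesis
    using ncx0 glob conv unfolding a_def rmin_def by blast
qed

end
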